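(* For $j\in\{1,\dots,n\}$, let $g^{\mathrm{in}}_j$ be the restriction of $\chi_{\tau_j}$ with top point $\tau_j=(\tau_j^1,\tau_j^2)$ to $X_j=[q_j^l,q_j^u]$, where $q_j^l\le\tau_j^1\le q_j^u$. Write $\tau^1=(\tau_j^1)_{j},\tau^2=(\tau_j^2)_j,q^l=(q^l_j)_j,q^u=(q^u_j)_j\in\mathbb{R}^n$. Then: (i) $g^{\mathrm{out}}=\star\{(g^{\mathrm{in}}_j,X_j)\}_{j=1}^n$ is the restriction of the $\chi$ function with top point $(\mathbf{1}^\top\tau^1,\mathbf{1}^\top\tau^2)$ to the domain $[\mathbf{1}^\top q^l,\mathbf{1}^\top q^u]$; (ii) the set of maximizers in the definition of $g^{\mathrm{out}}(z)$ is $\{x^*\in[q^l,\tau^1]:\mathbf{1}^\top x^*=z\}$ if $\mathbf{1}^\top q^l\le z<\mathbf{1}^\top\tau^1$, is $\{\tau^1\}$ if $z=\mathbf{1}^\top\tau^1$, and is $\{x^*\in[\tau^1,q^u]:\mathbf{1}^\top x^*=z\}$ if $\mathbf{1}^\top\tau^1<z\le\mathbf{1}^\top q^u$.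
   Context: For $\tau=(\tau_1,\tau_2)\in\mathbb{R}^2$, $\chi_\tau(x)=x-\tau_1+\tau_2$ for $x\le\tau_1$ and $\chi_\tau(x)=-x+\tau_1+\tau_2$ for $x>\tau_1$; $\tau$ is its top point. The operator $\star$: given $g_j:X_j\to\mathbb{R}$, $j=1,\dots,n$, $\star\{(g_j,X_j)\}_{j=1}^n$ is the function with domain the Minkowski sum $\sum_jX_j$ defined by $z\mapsto\max\{\sum_jg_j(x_j):x\in\mathbb{R}^n,\ \mathbf{1}^\top x=z,\ x_j\in X_j\ \forall j\}$. For vectors, $[a,b]=\{x:a\le x\le b\}$ componentwise; $\mathbf{1}$ is the all-ones vector. *)

theory Defs
  imports "HOL-Analysis.Analysis"
begin

definition chi :: "real \<times> real \<Rightarrow> real \<Rightarrow> real" where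
  "chi tau x = (if x \<le> fst tau then x - fst tau + snd tau else - x + fst tau + snd tau)"

text \<open>Feasible decompositions of z: x with x_j in X_j and 1^T x = z.
  Indices j range over the finite type 'n (so n = CARD('n)).\<close>
definition feasible :: "('n::finite \<Rightarrow> real set) \<Rightarrow> real \<Rightarrow> (real^'n) set" where
  "feasible X z = {x. (\<forall>j. x $ j \<in> X j) \<and> (\<Sum>j\<in>UNIV. x $ j) = z}"

text \<open>Domain of the star-function: the Minkowski sum of the X_j.\<close>
definition minkowski_sum :: "('n::finite \<Rightarrow> real set) \<Rightarrow> real set" where
  "minkowski_sum X = {z. \<exists>x. (\<forall>j. x $ j \<in> X j) \<and> (\<Sum>j\<in>UNIV. x $ j) = z}"

definition star :: "('n::finite \<Rightarrow> real \<Rightarrow> real) \<Rightarrow> ('n \<Rightarrow> real set) \<Rightarrow> real \<Rightarrow> real" where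
  "star g X z = (GREATEST v. v \<in> (\<lambda>x. \<Sum>j\<in>UNIV. g j (x $ j)) ` feasible X z)"

definition star_argmax :: "('n::finite \<Rightarrow> real \<Rightarrow> real) \<Rightarrow> ('n \<Rightarrow> real set) \<Rightarrow> real \<Rightarrow> (real^'n) set" where
  "star_argmax g X z = {x \<in> feasible X z. \<forall>y \<in> feasible X z.
      (\<Sum>j\<in>UNIV. g j (y $ j)) \<le> (\<Sum>j\<in>UNIV. g j (x $ j))}"

end

theory Submission
  imports Defs
begin

lemma chi_alt: "chi (a,b) x = b - \<bar>x - a\<bar>"
  by (simp add: chi_def abs_if)

lemma sumg: "(\<Sum>j\<in>UNIV. chi (t1$j, t2$j) ((x::real^'n)$j))
   = (\<Sum>j\<in>UNIV. t2$j) - (\<Sum>j\<in>UNIV. \<bar>x$j - t1$j\<bar>)"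
  by (simp add: chi_alt sum_subtractf)

lemma sumabs_ge: "\<bar>(\<Sum>j\<in>UNIV. (x::real^'n)$j) - (\<Sum>j\<in>UNIV. t1$j)\<bar> \<le> (\<Sum>j\<in>UNIV. \<bar>x$j - t1$j\<bar>)"
  by (metis sum_subtractf sum_abs)

lemma nonpos_eq: "(\<forall>j. (f::'n::finite \<Rightarrow> real) j \<le> 0) \<Longrightarrow> (\<Sum>j\<in>UNIV. \<bar>f j\<bar>) = \<bar>\<Sum>j\<in>UNIV. f j\<bar>"
proof -
  assume h: "\<forall>j. f j \<le> 0"
  have "(\<Sum>j\<in>UNIV. \<bar>f j\<bar>) = (\<Sum>j\<in>UNIV. - f j)" using h by (intro sum.cong) auto
  moreover have "(\<Sum>j\<in>UNIV. f j) \<le> 0" using h by (simp add: sum_nonpos)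
  ultimately show ?thesis by (simp add: sum_negf)
qed

lemma nonneg_eq: "(\<forall>j. (f::'n::finite \<Rightarrow> real) j \<ge> 0) \<Longrightarrow> (\<Sum>j\<in>UNIV. \<bar>f j\<bar>) = \<bar>\<Sum>j\<in>UNIV. f j\<bar>"
proof -
  assume h: "\<forall>j. f j \<ge> 0"
  have "(\<Sum>j\<in>UNIV. \<bar>f j\<bar>) = (\<Sum>j\<in>UNIV. f j)" using h by (intro sum.cong) auto
  moreover have "(\<Sum>j\<in>UNIV. f j) \<ge> 0" using h by (simp add: sum_nonneg)
  ultimately show ?thesis by simp
qed

lemma eq_nonpos: "(\<Sum>j\<in>UNIV. \<bar>(f::'n::finite \<Rightarrow> real) j\<bar>) = - (\<Sum>j\<in>UNIV. f j) \<Longrightarrow> f j \<le> 0"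
proof -
  assume h: "(\<Sum>j\<in>UNIV. \<bar>f j\<bar>) = - (\<Sum>j\<in>UNIV. f j)"
  have "(\<Sum>j\<in>UNIV. \<bar>f j\<bar> + f j) = 0" using h by (simp add: sum.distrib)
  moreover have "\<forall>j\<in>UNIV. \<bar>f j\<bar> + f j \<ge> 0" by auto
  ultimately have "\<bar>f j\<bar> + f j = 0" using sum_nonneg_eq_0_iff[of UNIV "\<lambda>j. \<bar>f j\<bar> + f j"] by auto
  then show ?thesis by auto
qed

lemma eq_nonneg: "(\<Sum>j\<in>UNIV. \<bar>(f::'n::finite \<Rightarrow> real) j\<bar>) = (\<Sum>j\<in>UNIV. f j) \<Longrightarrow> f j \<ge> 0"
proof -
  assume h: "(\<Sum>j\<in>UNIV. \<bar>f j\<bar>) = (\<Sum>j\<in>UNIV. f j)"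
  have "(\<Sum>j\<in>UNIV. \<bar>f j\<bar> - f j) = 0" using h by (simp add: sum_subtractf)
  moreover have "\<forall>j\<in>UNIV. \<bar>f j\<bar> - f j \<ge> 0" by auto
  ultimately have "\<bar>f j\<bar> - f j = 0" using sum_nonneg_eq_0_iff[of UNIV "\<lambda>j. \<bar>f j\<bar> - f j"] by auto
  then show ?thesis by auto
qed

lemma witness:
  fixes t1 ql qu :: "real^'n"
  assumes A: "\<forall>j. ql $ j \<le> t1 $ j \<and> t1 $ j \<le> qu $ j"
    and z: "(\<Sum>j\<in>UNIV. ql $ j) \<le> z" "z \<le> (\<Sum>j\<in>UNIV. qu $ j)"
  shows "\<exists>x::real^'n. (\<forall>j. ql$j \<le> x$j \<and> x$j \<le> qu$j) \<and> (\<Sum>j\<in>UNIV. x$j) = z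
     \<and> (\<Sum>j\<in>UNIV. \<bar>x$j - t1$j\<bar>) = \<bar>z - (\<Sum>j\<in>UNIV. t1$j)\<bar>"
proof (cases "z \<le> (\<Sum>j\<in>UNIV. t1 $ j)")
  case True
  define L where "L = (\<Sum>j\<in>UNIV. ql $ j)"
  define T where "T = (\<Sum>j\<in>UNIV. t1 $ j)"
  have LT: "L \<le> T" unfolding L_def T_def using A by (simp add: sum_mono)
  define s where "s = (if T = L then 0 else (z - L) / (T - L))"
  have s0: "0 \<le> s" and s1: "s \<le> 1" using True z LT unfolding s_def L_def[symmetric] T_def[symmetric]
    by (auto simp: field_simps)
  define x :: "real^'n" where "x = (\<chi> j. ql$j + s * (t1$j - ql$j))"
  have xj: "x$j = ql$j + s * (t1$j - ql$j)" for j by (simp add: x_def)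
  have b: "ql$j \<le> x$j \<and> x$j \<le> t1$j" for j
  proof -
    have "0 \<le> s * (t1$j - ql$j)" using s0 A by simp
    moreover have "s * (t1$j - ql$j) \<le> 1 * (t1$j - ql$j)" using s1 A by (intro mult_right_mono) auto
    ultimately show ?thesis by (simp add: xj)
  qed
  have sx: "(\<Sum>j\<in>UNIV. x$j) = L + s * (T - L)"
    by (simp add: xj sum.distrib sum_distrib_left[symmetric] sum_subtractf L_def T_def)
  have sz: "(\<Sum>j\<in>UNIV. x$j) = z"
    using True z LT unfolding sx s_def L_def[symmetric] T_def[symmetric] by (auto simp: field_simps)
  have "(\<Sum>j\<in>UNIV. \<bar>x$j - t1$j\<bar>) = \<bar>\<Sum>j\<in>UNIV. x$j - t1$j\<bar>"
    using b by (intro nonpos_eq) auto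
  also have "\<dots> = \<bar>z - T\<bar>" by (simp add: sum_subtractf sz T_def)
  finally show ?thesis using b A sz unfolding T_def by (metis order_trans)
next
  case False
  define U where "U = (\<Sum>j\<in>UNIV. qu $ j)"
  define T where "T = (\<Sum>j\<in>UNIV. t1 $ j)"
  have LT: "T \<le> U" unfolding U_def T_def using A by (simp add: sum_mono)
  define s where "s = (if U = T then 0 else (z - T) / (U - T))"
  have s0: "0 \<le> s" and s1: "s \<le> 1" using False z LT unfolding s_def U_def[symmetric] T_def[symmetric]
    by (auto simp: field_simps)
  define x :: "real^'n" where "x = (\<chi> j. t1$j + s * (qu$j - t1$j))"
  have xj: "x$j = t1$j + s * (qu$j - t1$j)" for j by (simp add: x_def)
  have b: "t1$j \<le> x$j \<and> x$j \<le> qu$j" for j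
  proof -
    have "0 \<le> s * (qu$j - t1$j)" using s0 A by simp
    moreover have "s * (qu$j - t1$j) \<le> 1 * (qu$j - t1$j)" using s1 A by (intro mult_right_mono) auto
    ultimately show ?thesis by (simp add: xj)
  qed
  have sx: "(\<Sum>j\<in>UNIV. x$j) = T + s * (U - T)"
    by (simp add: xj sum.distrib sum_distrib_left[symmetric] sum_subtractf U_def T_def)
  have sz: "(\<Sum>j\<in>UNIV. x$j) = z"
    using False z LT unfolding sx s_def U_def[symmetric] T_def[symmetric] by (auto simp: field_simps)
  have "(\<Sum>j\<in>UNIV. \<bar>x$j - t1$j\<bar>) = \<bar>\<Sum>j\<in>UNIV. x$j - t1$j\<bar>"
    using b by (intro nonneg_eq) auto
  also have "\<dots> = \<bar>z - T\<bar>" by (simp add: sum_subtractf sz T_def)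
  finally show ?thesis using b A sz unfolding T_def by (metis order_trans)
qed

lemma argmax_char:
  fixes t1 t2 ql qu :: "real^'n"
  assumes A: "\<forall>j. ql $ j \<le> t1 $ j \<and> t1 $ j \<le> qu $ j"
    and z: "(\<Sum>j\<in>UNIV. ql $ j) \<le> z" "z \<le> (\<Sum>j\<in>UNIV. qu $ j)"
  shows "star_argmax (\<lambda>j. chi (t1 $ j, t2 $ j)) (\<lambda>j. {ql $ j .. qu $ j}) z
     = {x. (\<forall>j. ql$j \<le> x$j \<and> x$j \<le> qu$j) \<and> (\<Sum>j\<in>UNIV. x$j) = z
          \<and> (\<Sum>j\<in>UNIV. \<bar>x$j - t1$j\<bar>) = \<bar>z - (\<Sum>j\<in>UNIV. t1$j)\<bar>}"
     and "star (\<lambda>j. chi (t1 $ j, t2 $ j)) (\<lambda>j. {ql $ j .. qu $ j}) z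
     = chi ((\<Sum>j\<in>UNIV. t1 $ j), (\<Sum>j\<in>UNIV. t2 $ j)) z"
proof -
  obtain w :: "real^'n" where w: "\<forall>j. ql$j \<le> w$j \<and> w$j \<le> qu$j" "(\<Sum>j\<in>UNIV. w$j) = z"
     "(\<Sum>j\<in>UNIV. \<bar>w$j - t1$j\<bar>) = \<bar>z - (\<Sum>j\<in>UNIV. t1$j)\<bar>"
    using witness[OF A z] by blast
  have wF: "w \<in> feasible (\<lambda>j. {ql $ j .. qu $ j}) z" using w by (simp add: feasible_def)
  have lb: "\<bar>z - (\<Sum>j\<in>UNIV. t1$j)\<bar> \<le> (\<Sum>j\<in>UNIV. \<bar>y$j - t1$j\<bar>)"
    if "y \<in> feasible (\<lambda>j. {ql $ j .. qu $ j}) z" for y :: "real^'n"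
    using that sumabs_ge[of y t1] by (simp add: feasible_def)
  show "star_argmax (\<lambda>j. chi (t1 $ j, t2 $ j)) (\<lambda>j. {ql $ j .. qu $ j}) z
     = {x. (\<forall>j. ql$j \<le> x$j \<and> x$j \<le> qu$j) \<and> (\<Sum>j\<in>UNIV. x$j) = z
          \<and> (\<Sum>j\<in>UNIV. \<bar>x$j - t1$j\<bar>) = \<bar>z - (\<Sum>j\<in>UNIV. t1$j)\<bar>}"
  proof (intro set_eqI iffI)
    fix x :: "real^'n"
    assume x: "x \<in> star_argmax (\<lambda>j. chi (t1 $ j, t2 $ j)) (\<lambda>j. {ql $ j .. qu $ j}) z"
    then have xF: "x \<in> feasible (\<lambda>j. {ql $ j .. qu $ j}) z" by (simp add: star_argmax_def)
    have "(\<Sum>j\<in>UNIV. \<bar>x$j - t1$j\<bar>) \<le> (\<Sum>j\<in>UNIV. \<bar>w$j - t1$j\<bar>)"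
      using x wF unfolding star_argmax_def by (auto simp: sumg)
    with lb[OF xF] w(3) xF show "x \<in> {x. (\<forall>j. ql$j \<le> x$j \<and> x$j \<le> qu$j) \<and> (\<Sum>j\<in>UNIV. x$j) = z
          \<and> (\<Sum>j\<in>UNIV. \<bar>x$j - t1$j\<bar>) = \<bar>z - (\<Sum>j\<in>UNIV. t1$j)\<bar>}"
      by (auto simp: feasible_def)
  next
    fix x :: "real^'n"
    assume x: "x \<in> {x. (\<forall>j. ql$j \<le> x$j \<and> x$j \<le> qu$j) \<and> (\<Sum>j\<in>UNIV. x$j) = z
          \<and> (\<Sum>j\<in>UNIV. \<bar>x$j - t1$j\<bar>) = \<bar>z - (\<Sum>j\<in>UNIV. t1$j)\<bar>}"
    then show "x \<in> star_argmax (\<lambda>j. chi (t1 $ j, t2 $ j)) (\<lambda>j. {ql $ j .. qu $ j}) z"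
      using lb unfolding star_argmax_def by (auto simp: sumg feasible_def)
  qed
  show "star (\<lambda>j. chi (t1 $ j, t2 $ j)) (\<lambda>j. {ql $ j .. qu $ j}) z
     = chi ((\<Sum>j\<in>UNIV. t1 $ j), (\<Sum>j\<in>UNIV. t2 $ j)) z"
    unfolding star_def
  proof (rule Greatest_equality)
    show "chi ((\<Sum>j\<in>UNIV. t1 $ j), (\<Sum>j\<in>UNIV. t2 $ j)) z
      \<in> (\<lambda>x. \<Sum>j\<in>UNIV. chi (t1 $ j, t2 $ j) (x $ j)) ` feasible (\<lambda>j. {ql $ j .. qu $ j}) z"
      using wF w(3) by (intro image_eqI[of _ _ w]) (simp_all add: sumg chi_alt sum_subtractf)
  next
    fix y assume "y \<in> (\<lambda>x. \<Sum>j\<in>UNIV. chi (t1 $ j, t2 $ j) (x $ j)) ` feasible (\<lambda>j. {ql $ j .. qu $ j}) z"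
    then obtain x where xF: "x \<in> feasible (\<lambda>j. {ql $ j .. qu $ j}) z"
      and y: "y = (\<Sum>j\<in>UNIV. chi (t1 $ j, t2 $ j) (x $ j))" by blast
    show "y \<le> chi ((\<Sum>j\<in>UNIV. t1 $ j), (\<Sum>j\<in>UNIV. t2 $ j)) z"
      unfolding y sumg chi_alt using lb[OF xF] by (simp add: sum_subtractf)
  qed
qed

theorem lemma5:
  fixes t1 t2 ql qu :: "real^'n"
  assumes "\<forall>j. ql $ j \<le> t1 $ j \<and> t1 $ j \<le> qu $ j"
  shows "minkowski_sum (\<lambda>j. {ql $ j .. qu $ j}) = {(\<Sum>j\<in>UNIV. ql $ j) .. (\<Sum>j\<in>UNIV. qu $ j)}
    \<and> (\<forall>z \<in> {(\<Sum>j\<in>UNIV. ql $ j) .. (\<Sum>j\<in>UNIV. qu $ j)}.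
          star (\<lambda>j. chi (t1 $ j, t2 $ j)) (\<lambda>j. {ql $ j .. qu $ j}) z
            = chi ((\<Sum>j\<in>UNIV. t1 $ j), (\<Sum>j\<in>UNIV. t2 $ j)) z)
    \<and> (\<forall>z. (\<Sum>j\<in>UNIV. ql $ j) \<le> z \<and> z < (\<Sum>j\<in>UNIV. t1 $ j) \<longrightarrow>
          star_argmax (\<lambda>j. chi (t1 $ j, t2 $ j)) (\<lambda>j. {ql $ j .. qu $ j}) z
            = {x. (\<forall>j. ql $ j \<le> x $ j \<and> x $ j \<le> t1 $ j) \<and> (\<Sum>j\<in>UNIV. x $ j) = z})
    \<and> star_argmax (\<lambda>j. chi (t1 $ j, t2 $ j)) (\<lambda>j. {ql $ j .. qu $ j}) (\<Sum>j\<in>UNIV. t1 $ j) = {t1}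
    \<and> (\<forall>z. (\<Sum>j\<in>UNIV. t1 $ j) < z \<and> z \<le> (\<Sum>j\<in>UNIV. qu $ j) \<longrightarrow>
          star_argmax (\<lambda>j. chi (t1 $ j, t2 $ j)) (\<lambda>j. {ql $ j .. qu $ j}) z
            = {x. (\<forall>j. t1 $ j \<le> x $ j \<and> x $ j \<le> qu $ j) \<and> (\<Sum>j\<in>UNIV. x $ j) = z})"
proof -
  note A = assms
  have LT: "(\<Sum>j\<in>UNIV. ql $ j) \<le> (\<Sum>j\<in>UNIV. t1 $ j)" using A by (simp add: sum_mono)
  have TU: "(\<Sum>j\<in>UNIV. t1 $ j) \<le> (\<Sum>j\<in>UNIV. qu $ j)" using A by (simp add: sum_mono)
  have P1: "minkowski_sum (\<lambda>j. {ql $ j .. qu $ j}) = {(\<Sum>j\<in>UNIV. ql $ j) .. (\<Sum>j\<in>UNIV. qu $ j)}"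
  proof (intro set_eqI iffI)
    fix z assume "z \<in> minkowski_sum (\<lambda>j. {ql $ j .. qu $ j})"
    then obtain x :: "real^'n" where "\<forall>j. ql$j \<le> x$j \<and> x$j \<le> qu$j" "(\<Sum>j\<in>UNIV. x$j) = z"
      by (auto simp: minkowski_sum_def)
    then show "z \<in> {(\<Sum>j\<in>UNIV. ql $ j) .. (\<Sum>j\<in>UNIV. qu $ j)}"
      by (auto intro!: sum_mono)
  next
    fix z assume "z \<in> {(\<Sum>j\<in>UNIV. ql $ j) .. (\<Sum>j\<in>UNIV. qu $ j)}"
    then show "z \<in> minkowski_sum (\<lambda>j. {ql $ j .. qu $ j})"
      using witness[OF A, of z] by (auto simp: minkowski_sum_def)
  qed
  have P3: "star_argmax (\<lambda>j. chi (t1 $ j, t2 $ j)) (\<lambda>j. {ql $ j .. qu $ j}) z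
            = {x. (\<forall>j. ql $ j \<le> x $ j \<and> x $ j \<le> t1 $ j) \<and> (\<Sum>j\<in>UNIV. x $ j) = z}"
    if z: "(\<Sum>j\<in>UNIV. ql $ j) \<le> z" "z \<le> (\<Sum>j\<in>UNIV. t1 $ j)" for z
    unfolding argmax_char(1)[OF A z(1) order_trans[OF z(2) TU]]
  proof (intro set_eqI iffI)
    fix x :: "real^'n"
    assume x: "x \<in> {x. (\<forall>j. ql$j \<le> x$j \<and> x$j \<le> qu$j) \<and> (\<Sum>j\<in>UNIV. x$j) = z
          \<and> (\<Sum>j\<in>UNIV. \<bar>x$j - t1$j\<bar>) = \<bar>z - (\<Sum>j\<in>UNIV. t1$j)\<bar>}"
    then have "(\<Sum>j\<in>UNIV. \<bar>x$j - t1$j\<bar>) = - (\<Sum>j\<in>UNIV. x$j - t1$j)"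
      using z by (auto simp: sum_subtractf)
    then have "x$j - t1$j \<le> 0" for j by (rule eq_nonpos)
    then show "x \<in> {x. (\<forall>j. ql $ j \<le> x $ j \<and> x $ j \<le> t1 $ j) \<and> (\<Sum>j\<in>UNIV. x $ j) = z}"
      using x by auto
  next
    fix x :: "real^'n"
    assume x: "x \<in> {x. (\<forall>j. ql $ j \<le> x $ j \<and> x $ j \<le> t1 $ j) \<and> (\<Sum>j\<in>UNIV. x $ j) = z}"
    then have "(\<Sum>j\<in>UNIV. \<bar>x$j - t1$j\<bar>) = \<bar>\<Sum>j\<in>UNIV. x$j - t1$j\<bar>"
      by (intro nonpos_eq) auto
    moreover have "\<forall>j. ql$j \<le> x$j \<and> x$j \<le> qu$j"
    proof
      fix j have "ql$j \<le> x$j \<and> x$j \<le> t1$j" "ql$j \<le> t1$j \<and> t1$j \<le> qu$j" using x A by auto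
      then show "ql$j \<le> x$j \<and> x$j \<le> qu$j" by linarith
    qed
    ultimately have "(\<Sum>j\<in>UNIV. \<bar>x$j - t1$j\<bar>) = \<bar>\<Sum>j\<in>UNIV. x$j - t1$j\<bar>" "\<forall>j. ql$j \<le> x$j \<and> x$j \<le> qu$j" by auto
    show "x \<in> {x. (\<forall>j. ql$j \<le> x$j \<and> x$j \<le> qu$j) \<and> (\<Sum>j\<in>UNIV. x$j) = z
          \<and> (\<Sum>j\<in>UNIV. \<bar>x$j - t1$j\<bar>) = \<bar>z - (\<Sum>j\<in>UNIV. t1$j)\<bar>}"
    proof -
      have "(\<Sum>j\<in>UNIV. x$j - t1$j) = (\<Sum>j\<in>UNIV. x$j) - (\<Sum>j\<in>UNIV. t1$j)" by (rule sum_subtractf)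
      then show ?thesis using x \<open>\<forall>j. ql$j \<le> x$j \<and> x$j \<le> qu$j\<close>
        \<open>(\<Sum>j\<in>UNIV. \<bar>x$j - t1$j\<bar>) = \<bar>\<Sum>j\<in>UNIV. x$j - t1$j\<bar>\<close> by simp
    qed
  qed
  have P5: "star_argmax (\<lambda>j. chi (t1 $ j, t2 $ j)) (\<lambda>j. {ql $ j .. qu $ j}) z
            = {x. (\<forall>j. t1 $ j \<le> x $ j \<and> x $ j \<le> qu $ j) \<and> (\<Sum>j\<in>UNIV. x $ j) = z}"
    if z: "(\<Sum>j\<in>UNIV. t1 $ j) \<le> z" "z \<le> (\<Sum>j\<in>UNIV. qu $ j)" for z
    unfolding argmax_char(1)[OF A order_trans[OF LT z(1)] z(2)]
  proof (intro set_eqI iffI)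
    fix x :: "real^'n"
    assume x: "x \<in> {x. (\<forall>j. ql$j \<le> x$j \<and> x$j \<le> qu$j) \<and> (\<Sum>j\<in>UNIV. x$j) = z
          \<and> (\<Sum>j\<in>UNIV. \<bar>x$j - t1$j\<bar>) = \<bar>z - (\<Sum>j\<in>UNIV. t1$j)\<bar>}"
    then have "(\<Sum>j\<in>UNIV. \<bar>x$j - t1$j\<bar>) = (\<Sum>j\<in>UNIV. x$j - t1$j)"
      using z by (auto simp: sum_subtractf)
    then have "x$j - t1$j \<ge> 0" for j by (rule eq_nonneg)
    then show "x \<in> {x. (\<forall>j. t1 $ j \<le> x $ j \<and> x $ j \<le> qu $ j) \<and> (\<Sum>j\<in>UNIV. x $ j) = z}"
      using x by auto
  next
    fix x :: "real^'n"
    assume x: "x \<in> {x. (\<forall>j. t1 $ j \<le> x $ j \<and> x $ j \<le> qu $ j) \<and> (\<Sum>j\<in>UNIV. x $ j) = z}"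
    then have "(\<Sum>j\<in>UNIV. \<bar>x$j - t1$j\<bar>) = \<bar>\<Sum>j\<in>UNIV. x$j - t1$j\<bar>"
      by (intro nonneg_eq) auto
    moreover have "\<forall>j. ql$j \<le> x$j \<and> x$j \<le> qu$j"
    proof
      fix j have "t1$j \<le> x$j \<and> x$j \<le> qu$j" "ql$j \<le> t1$j \<and> t1$j \<le> qu$j" using x A by auto
      then show "ql$j \<le> x$j \<and> x$j \<le> qu$j" by linarith
    qed
    ultimately have "(\<Sum>j\<in>UNIV. \<bar>x$j - t1$j\<bar>) = \<bar>\<Sum>j\<in>UNIV. x$j - t1$j\<bar>" "\<forall>j. ql$j \<le> x$j \<and> x$j \<le> qu$j" by auto
    show "x \<in> {x. (\<forall>j. ql$j \<le> x$j \<and> x$j \<le> qu$j) \<and> (\<Sum>j\<in>UNIV. x$j) = z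
          \<and> (\<Sum>j\<in>UNIV. \<bar>x$j - t1$j\<bar>) = \<bar>z - (\<Sum>j\<in>UNIV. t1$j)\<bar>}"
    proof -
      have "(\<Sum>j\<in>UNIV. x$j - t1$j) = (\<Sum>j\<in>UNIV. x$j) - (\<Sum>j\<in>UNIV. t1$j)" by (rule sum_subtractf)
      then show ?thesis using x \<open>\<forall>j. ql$j \<le> x$j \<and> x$j \<le> qu$j\<close>
        \<open>(\<Sum>j\<in>UNIV. \<bar>x$j - t1$j\<bar>) = \<bar>\<Sum>j\<in>UNIV. x$j - t1$j\<bar>\<close> by simp
    qed
  qed
  have P4: "star_argmax (\<lambda>j. chi (t1 $ j, t2 $ j)) (\<lambda>j. {ql $ j .. qu $ j}) (\<Sum>j\<in>UNIV. t1 $ j) = {t1}"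
  proof -
    have "star_argmax (\<lambda>j. chi (t1 $ j, t2 $ j)) (\<lambda>j. {ql $ j .. qu $ j}) (\<Sum>j\<in>UNIV. t1 $ j)
      = {x. (\<forall>j. ql $ j \<le> x $ j \<and> x $ j \<le> t1 $ j) \<and> (\<Sum>j\<in>UNIV. x $ j) = (\<Sum>j\<in>UNIV. t1 $ j)}"
      using P3[OF LT order_refl] .
    also have "\<dots> = {t1}"
    proof (intro set_eqI iffI)
      fix x :: "real^'n"
      assume x: "x \<in> {x. (\<forall>j. ql $ j \<le> x $ j \<and> x $ j \<le> t1 $ j) \<and> (\<Sum>j\<in>UNIV. x $ j) = (\<Sum>j\<in>UNIV. t1 $ j)}"
      then have "x \<in> {x. (\<forall>j. t1 $ j \<le> x $ j \<and> x $ j \<le> qu $ j) \<and> (\<Sum>j\<in>UNIV. x $ j) = (\<Sum>j\<in>UNIV. t1 $ j)}"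
        using x P3[OF LT order_refl] P5[OF order_refl TU] by metis
      then have h1: "\<forall>j. t1 $ j \<le> x $ j" by blast
      from x have h2: "\<forall>j. x $ j \<le> t1 $ j" by blast
      have "x $ j = t1 $ j" for j using h1 h2 by (meson order_antisym)
      then show "x \<in> {t1}" by (simp add: vec_eq_iff)
    next
      fix x :: "real^'n" assume "x \<in> {t1}"
      then show "x \<in> {x. (\<forall>j. ql $ j \<le> x $ j \<and> x $ j \<le> t1 $ j) \<and> (\<Sum>j\<in>UNIV. x $ j) = (\<Sum>j\<in>UNIV. t1 $ j)}"
        using A by simp
    qed
    finally show ?thesis .
  qed
  have P2: "\<forall>z \<in> {(\<Sum>j\<in>UNIV. ql $ j) .. (\<Sum>j\<in>UNIV. qu $ j)}.
          star (\<lambda>j. chi (t1 $ j, t2 $ j)) (\<lambda>j. {ql $ j .. qu $ j}) z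
            = chi ((\<Sum>j\<in>UNIV. t1 $ j), (\<Sum>j\<in>UNIV. t2 $ j)) z"
    using argmax_char(2)[OF A] by simp
  show ?thesis
  proof (intro conjI allI impI)
    fix z assume "(\<Sum>j\<in>UNIV. ql $ j) \<le> z \<and> z < (\<Sum>j\<in>UNIV. t1 $ j)"
    then show "star_argmax (\<lambda>j. chi (t1 $ j, t2 $ j)) (\<lambda>j. {ql $ j .. qu $ j}) z
            = {x. (\<forall>j. ql $ j \<le> x $ j \<and> x $ j \<le> t1 $ j) \<and> (\<Sum>j\<in>UNIV. x $ j) = z}"
      using P3 by simp
  next
    fix z assume "(\<Sum>j\<in>UNIV. t1 $ j) < z \<and> z \<le> (\<Sum>j\<in>UNIV. qu $ j)"
    then show "star_argmax (\<lambda>j. chi (t1 $ j, t2 $ j)) (\<lambda>j. {ql $ j .. qu $ j}) z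
            = {x. (\<forall>j. t1 $ j \<le> x $ j \<and> x $ j \<le> qu $ j) \<and> (\<Sum>j\<in>UNIV. x $ j) = z}"
      using P5 by simp
  qed (fact P1 P2 P4)+
qed

end
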